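(* The exponential generating function $g(x,y)=g(x,y;p,q,r)=\sum_{n\ge1}b_n(y;p,q,r)\frac{x^n}{n!}$ satisfies $$\frac{\partial}{\partial x}g(x,y)=y+\left(p+\frac{yr-q}{1-y}\right)g(x,y)+\frac{y}{1-y}\bigl(q\,g(x,1)-yr\,g(xy,1)\bigr).$$
   Context: An inversion sequence of length $n$ is a sequence $\rho=\rho_1\cdots\rho_n$ of integers with $1\le \rho_i\le i$ for all $i$; $I_{n,i}$ is the set of those of length $n$ with last letter $i$. A level, descent, or ascent of $\rho$ is an index $i\in[n-1]$ with $\rho_i=\rho_{i+1}$, $\rho_i>\rho_{i+1}$, or $\rho_i<\rho_{i+1}$, respectively. Let $b_{n,i}(p,q,r)=\sum_{\rho\in I_{n,i}}p^{\mathrm{lev}(\rho)}q^{\mathrm{des}(\rho)}r^{\mathrm{asc}(\rho)}$ (numbers of levels, descents, ascents) and $b_n(y;p,q,r)=\sum_{i=1}^n b_{n,i}(p,q,r)y^i$. *)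

theory Defs
  imports Complex_Main "HOL-Computational_Algebra.Formal_Power_Series"
begin

text \<open>Inversion sequences of length n, as lists; list position k (0-based)
  corresponds to index k+1, so the condition is 1 <= rho_(k+1) <= k+1.\<close>
definition inv_seqs :: "nat \<Rightarrow> nat list set" where
  "inv_seqs n = {xs. length xs = n \<and> (\<forall>k<n. 1 \<le> xs ! k \<and> xs ! k \<le> k + 1)}"

definition inv_seqs_last :: "nat \<Rightarrow> nat \<Rightarrow> nat list set" where
  "inv_seqs_last n i = {xs \<in> inv_seqs n. last xs = i}"

definition lev :: "nat list \<Rightarrow> nat" where
  "lev xs = card {k. k + 1 < length xs \<and> xs ! k = xs ! (k + 1)}"

definition des :: "nat list \<Rightarrow> nat" where
  "des xs = card {k. k + 1 < length xs \<and> xs ! k > xs ! (k + 1)}"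

definition asc :: "nat list \<Rightarrow> nat" where
  "asc xs = card {k. k + 1 < length xs \<and> xs ! k < xs ! (k + 1)}"

definition bni :: "nat \<Rightarrow> nat \<Rightarrow> 'a::comm_ring_1 \<Rightarrow> 'a \<Rightarrow> 'a \<Rightarrow> 'a" where
  "bni n i p q r = (\<Sum>\<rho>\<in>inv_seqs_last n i. p ^ lev \<rho> * q ^ des \<rho> * r ^ asc \<rho>)"

definition bn :: "nat \<Rightarrow> 'a::comm_ring_1 \<Rightarrow> 'a \<Rightarrow> 'a \<Rightarrow> 'a \<Rightarrow> 'a" where
  "bn n y p q r = (\<Sum>i=1..n. bni n i p q r * y ^ i)"

definition egf :: "'a::field_char_0 \<Rightarrow> 'a \<Rightarrow> 'a \<Rightarrow> 'a \<Rightarrow> 'a fps" where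
  "egf p q r y = Abs_fps (\<lambda>n. if n = 0 then 0 else bn n y p q r / fact n)"

end

theory Submission imports Defs begin

lemma compose_lin_nth:
  fixes f :: "'a::comm_ring_1 fps"
  shows "fps_nth (f oo (fps_const c * fps_X)) n = c ^ n * fps_nth f n"
proof -
  have "fps_nth (f oo (fps_const c * fps_X)) n = (\<Sum>i=0..n. fps_nth f i * (if i = n then c ^ i else 0))"
    unfolding fps_compose_nth power_mult_distrib fps_const_power
    by (intro sum.cong) (auto simp: fps_X_power_nth)
  also have "\<dots> = (\<Sum>i=0..n. if i = n then c ^ n * fps_nth f n else 0)"
    by (intro sum.cong) auto
  also have "\<dots> = c ^ n * fps_nth f n" by simp
  finally show ?thesis .
qed

lemma inv_le:
  assumes "xs \<in> inv_seqs n" "k < n"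
  shows "xs ! k \<le> n" "1 \<le> xs ! k" "length xs = n"
proof -
  have "xs ! k \<le> k + 1" "1 \<le> xs ! k" "length xs = n" using assms by (auto simp: inv_seqs_def)
  then show "xs ! k \<le> n" "1 \<le> xs ! k" "length xs = n" using assms by auto
qed

lemma finite_inv_seqs: "finite (inv_seqs n)"
proof -
  have "inv_seqs n \<subseteq> {xs. set xs \<subseteq> {0..n} \<and> length xs = n}"
  proof
    fix xs assume xs: "xs \<in> inv_seqs n"
    have len: "length xs = n" using xs by (simp add: inv_seqs_def)
    then have "set xs \<subseteq> {0..n}" using inv_le[OF xs] by (auto simp: in_set_conv_nth)
    then show "xs \<in> {xs. set xs \<subseteq> {0..n} \<and> length xs = n}" using inv_le(3)[OF xs] xs
      by (auto simp: inv_seqs_def)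
  qed
  then show ?thesis by (rule finite_subset) (rule finite_lists_length_eq, simp)
qed

definition cnt :: "(nat \<Rightarrow> nat \<Rightarrow> bool) \<Rightarrow> nat list \<Rightarrow> nat" where
  "cnt P xs = card {k. k + 1 < length xs \<and> P (xs ! k) (xs ! (k + 1))}"

lemma cnt_snoc:
  assumes "xs \<noteq> []"
  shows "cnt P (xs @ [j]) = cnt P xs + (if P (last xs) j then 1 else 0)"
proof -
  let ?A = "{k. k + 1 < length xs \<and> P (xs ! k) (xs ! (k + 1))}"
  have eq: "{k. k + 1 < length (xs @ [j]) \<and> P ((xs @ [j]) ! k) ((xs @ [j]) ! (k + 1))}
      = ?A \<union> (if P (last xs) j then {length xs - 1} else {})"
  proof (rule set_eqI)
    fix k
    show "k \<in> {k. k + 1 < length (xs @ [j]) \<and> P ((xs @ [j]) ! k) ((xs @ [j]) ! (k + 1))} \<longleftrightarrow>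
      k \<in> ?A \<union> (if P (last xs) j then {length xs - 1} else {})"
    proof (cases "k + 1 < length xs")
      case True then show ?thesis by (auto simp: nth_append)
    next
      case False
      show ?thesis
      proof (cases "k = length xs - 1")
        case True then show ?thesis using assms False by (auto simp: nth_append last_conv_nth)
      next
        case False2: False
        then show ?thesis using False by auto
      qed
    qed
  qed
  have fin: "finite ?A" by (rule finite_subset[of _ "{..<length xs}"]) auto
  show ?thesis unfolding cnt_def eq using fin by (auto simp: card_insert_if)
qed

lemma lev_cnt: "lev xs = cnt (=) xs" by (simp add: lev_def cnt_def)
lemma des_cnt: "des xs = cnt (\<lambda>a b. a > b) xs" by (simp add: des_def cnt_def)
lemma asc_cnt: "asc xs = cnt (<) xs" by (simp add: asc_def cnt_def)

definition wt :: "'a::comm_ring_1 \<Rightarrow> 'a \<Rightarrow> 'a \<Rightarrow> nat list \<Rightarrow> 'a" where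
  "wt p q r xs = p ^ lev xs * q ^ des xs * r ^ asc xs"

definition ww :: "'a::comm_ring_1 \<Rightarrow> 'a \<Rightarrow> 'a \<Rightarrow> nat \<Rightarrow> nat \<Rightarrow> 'a" where
  "ww p q r i j = (if i = j then p else if j < i then q else r)"

lemma wt_snoc:
  assumes "xs \<noteq> []"
  shows "wt p q r (xs @ [j]) = wt p q r xs * ww p q r (last xs) j"
  using assms unfolding wt_def ww_def lev_cnt des_cnt asc_cnt
  by (simp add: cnt_snoc)

lemma bn_sum:
  assumes "n \<ge> 1"
  shows "bn n y p q r = (\<Sum>xs\<in>inv_seqs n. wt p q r xs * y ^ last xs)"
proof -
  have img: "last ` inv_seqs n \<subseteq> {1..n}"
  proof
    fix i assume "i \<in> last ` inv_seqs n"
    then obtain xs where xs: "xs \<in> inv_seqs n" "i = last xs" by auto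
    then have "length xs = n" "xs \<noteq> []" using assms by (auto simp: inv_seqs_def)
    then have "i = xs ! (n - 1)" using xs by (simp add: last_conv_nth)
    then show "i \<in> {1..n}" using inv_le[OF xs(1), of "n - 1"] assms by auto
  qed
  have "bn n y p q r = (\<Sum>i=1..n. \<Sum>xs\<in>{xs \<in> inv_seqs n. last xs = i}. wt p q r xs * y ^ last xs)"
    unfolding bn_def bni_def inv_seqs_last_def wt_def
    by (intro sum.cong refl) (simp add: sum_distrib_right)
  also have "\<dots> = (\<Sum>xs\<in>inv_seqs n. wt p q r xs * y ^ last xs)"
    by (rule sum.group[OF finite_inv_seqs _ img]) simp
  finally show ?thesis .
qed

lemma inv_seqs_Suc:
  "inv_seqs (Suc n) = (\<lambda>(xs, j). xs @ [j]) ` (SIGMA xs:inv_seqs n. {1..Suc n})"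
proof (rule set_eqI, rule iffI)
  fix ys assume ys: "ys \<in> inv_seqs (Suc n)"
  then have "ys \<noteq> []" by (auto simp: inv_seqs_def)
  then have "ys = butlast ys @ [last ys]" by simp
  moreover have "butlast ys \<in> inv_seqs n" using ys by (auto simp: inv_seqs_def nth_butlast)
  moreover have "last ys \<in> {1..Suc n}" using ys \<open>ys \<noteq> []\<close>
    by (auto simp: inv_seqs_def last_conv_nth)
  ultimately show "ys \<in> (\<lambda>(xs, j). xs @ [j]) ` (SIGMA xs:inv_seqs n. {1..Suc n})"
    by (intro image_eqI[of _ _ "(butlast ys, last ys)"]) auto
next
  fix ys assume "ys \<in> (\<lambda>(xs, j). xs @ [j]) ` (SIGMA xs:inv_seqs n. {1..Suc n})"
  then show "ys \<in> inv_seqs (Suc n)"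
    by (auto simp: inv_seqs_def nth_append less_Suc_eq)
qed

lemma inj_snoc: "inj_on (\<lambda>(xs, j). xs @ [j]) A"
  by (auto simp: inj_on_def)

lemma geo:
  fixes y :: "'a::comm_ring_1"
  assumes "1 \<le> i"
  shows "(1 - y) * (\<Sum>j=1..m. ww p q r i j * y ^ j) =
    (if m < i then q * (y - y ^ (m+1))
     else q * (y - y ^ i) + p * y ^ i * (1 - y) + r * (y ^ (i+1) - y ^ (m+1)))"
proof (induction m)
  case 0 then show ?case using assms by simp
next
  case (Suc m)
  have "(1 - y) * (\<Sum>j=1..Suc m. ww p q r i j * y ^ j) =
     (1 - y) * (\<Sum>j=1..m. ww p q r i j * y ^ j) + (1 - y) * ww p q r i (Suc m) * y ^ Suc m"
    by (simp add: algebra_simps)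
  also have "\<dots> = (if Suc m < i then q * (y - y ^ (Suc m+1))
     else q * (y - y ^ i) + p * y ^ i * (1 - y) + r * (y ^ (i+1) - y ^ (Suc m+1)))"
    unfolding Suc.IH
    using assms by (cases "i = Suc m") (auto simp: ww_def algebra_simps not_less less_Suc_eq)
  finally show ?case .
qed

lemma wt_sum_1:
  assumes "n \<ge> 1"
  shows "bn n 1 p q r = (\<Sum>xs\<in>inv_seqs n. wt p q r xs)"
  using bn_sum[OF assms, of 1] by simp

lemma last_le:
  assumes "xs \<in> inv_seqs n" "n \<ge> 1"
  shows "1 \<le> last xs \<and> last xs \<le> n"
proof -
  have "length xs = n" "xs \<noteq> []" using assms by (auto simp: inv_seqs_def)
  then have "last xs = xs ! (n - 1)" by (simp add: last_conv_nth)
  then show ?thesis using inv_le[OF assms(1), of "n - 1"] assms by auto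
qed

lemma recur:
  fixes y :: "'a::comm_ring_1"
  assumes "n \<ge> 1"
  shows "(1 - y) * bn (Suc n) y p q r = (p * (1 - y) + y * r - q) * bn n y p q r
     + q * y * bn n 1 p q r - r * y ^ (n + 2) * bn n 1 p q r"
proof -
  have "bn (Suc n) y p q r = (\<Sum>ys\<in>inv_seqs (Suc n). wt p q r ys * y ^ last ys)"
    by (rule bn_sum) simp
  also have "\<dots> = (\<Sum>(xs, j)\<in>(SIGMA xs:inv_seqs n. {1..Suc n}). wt p q r (xs @ [j]) * y ^ j)"
    unfolding inv_seqs_Suc by (subst sum.reindex[OF inj_snoc]) (simp add: case_prod_unfold)
  also have "\<dots> = (\<Sum>xs\<in>inv_seqs n. \<Sum>j=1..Suc n. wt p q r (xs @ [j]) * y ^ j)"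
    by (rule sum.Sigma[symmetric]) (auto simp: finite_inv_seqs)
  also have "\<dots> = (\<Sum>xs\<in>inv_seqs n. wt p q r xs * (\<Sum>j=1..Suc n. ww p q r (last xs) j * y ^ j))"
  proof (intro sum.cong refl)
    fix xs assume "xs \<in> inv_seqs n"
    then have "xs \<noteq> []" using assms by (auto simp: inv_seqs_def)
    then show "(\<Sum>j=1..Suc n. wt p q r (xs @ [j]) * y ^ j) =
        wt p q r xs * (\<Sum>j=1..Suc n. ww p q r (last xs) j * y ^ j)"
      unfolding wt_snoc[OF \<open>xs \<noteq> []\<close>] by (simp only: sum_distrib_left mult.assoc)
  qed
  finally have "(1 - y) * bn (Suc n) y p q r =
     (\<Sum>xs\<in>inv_seqs n. wt p q r xs * ((1 - y) * (\<Sum>j=1..Suc n. ww p q r (last xs) j * y ^ j)))"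
    by (simp add: sum_distrib_left algebra_simps)
  also have "\<dots> = (\<Sum>xs\<in>inv_seqs n. (p * (1 - y) + y * r - q) * (wt p q r xs * y ^ last xs)
       + q * y * wt p q r xs - r * y ^ (n + 2) * wt p q r xs)"
  proof (intro sum.cong refl)
    fix xs assume xs: "xs \<in> inv_seqs n"
    from last_le[OF xs assms] have l: "1 \<le> last xs" "last xs \<le> n" by auto
    show "wt p q r xs * ((1 - y) * (\<Sum>j=1..Suc n. ww p q r (last xs) j * y ^ j)) =
      (p * (1 - y) + y * r - q) * (wt p q r xs * y ^ last xs)
       + q * y * wt p q r xs - r * y ^ (n + 2) * wt p q r xs"
      unfolding geo[OF l(1)] using l by (simp add: algebra_simps)
  qed
  also have "\<dots> = (p * (1 - y) + y * r - q) * bn n y p q r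
     + q * y * bn n 1 p q r - r * y ^ (n + 2) * bn n 1 p q r"
    unfolding bn_sum[OF assms] wt_sum_1[OF assms]
    by (simp add: sum.distrib sum_subtractf sum_distrib_left)
  finally show ?thesis .
qed

lemma inv_seqs_1: "inv_seqs (Suc 0) = {[1]}"
proof -
  have "xs = [1]" if "length xs = 1" "1 \<le> xs ! 0" "xs ! 0 \<le> 1" for xs :: "nat list"
    using that by (cases xs) auto
  then show ?thesis by (auto simp: inv_seqs_def)
qed

lemma bn_1: "bn (Suc 0) y p q r = y"
  using bn_sum[of "Suc 0" y p q r] by (simp add: inv_seqs_1 wt_def lev_def des_def asc_def)

lemma alg0:
  fixes y :: "'a::field"
  assumes "D \<noteq> 0" "F \<noteq> 0"
  shows "((p * D + y * r - q) * B + q * y * B1 - r * y ^ (n + 2) * B1) / D / F =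
    (p + (y * r - q) / D) * (B / F) + y / D * (q * (B1 / F) - y * r * (y ^ n * (B1 / F)))"
  using assms by (simp add: field_simps power2_eq_square)

lemma alg:
  fixes y :: "'a::field"
  assumes "1 - y \<noteq> 0" "F \<noteq> 0"
  shows "((p * (1 - y) + y * r - q) * B + q * y * B1 - r * y ^ (n + 2) * B1) / (1 - y) / F =
    (p + (y * r - q) / (1 - y)) * (B / F) + y / (1 - y) * (q * (B1 / F) - y * r * (y ^ n * (B1 / F)))"
  by (rule alg0[OF assms])

theorem theorem3p3:
  fixes p q r y :: "'a::field_char_0"
  assumes "y \<noteq> 1"
  shows "fps_deriv (egf p q r y) =
           fps_const y + fps_const (p + (y * r - q) / (1 - y)) * egf p q r y
           + fps_const (y / (1 - y)) *
               (fps_const q * egf p q r 1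
                - fps_const (y * r) * (egf p q r 1 oo (fps_const y * fps_X)))"
proof (rule fps_ext)
  fix n
  have y1: "1 - y \<noteq> 0" using assms by simp
  show "fps_nth (fps_deriv (egf p q r y)) n = fps_nth (fps_const y + fps_const (p + (y * r - q) / (1 - y)) * egf p q r y
           + fps_const (y / (1 - y)) *
               (fps_const q * egf p q r 1
                - fps_const (y * r) * (egf p q r 1 oo (fps_const y * fps_X)))) n"
  proof (cases "n = 0")
    case True
    then show ?thesis by (simp add: egf_def compose_lin_nth bn_1)
  next
    case False
    then have n1: "n \<ge> 1" by simp
    define B where "B = bn n y p q r"
    define B1 where "B1 = bn n 1 p q r"
    have C: "bn (Suc n) y p q r = ((p * (1 - y) + y * r - q) * B + q * y * B1 - r * y ^ (n + 2) * B1) / (1 - y)"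
      using recur[OF n1, of y p q r] y1 unfolding B_def B1_def
      by (simp add: field_simps)
    have fn: "(fact n :: 'a) \<noteq> 0" by simp
    have en: "fps_nth (egf p q r z) m = (if m = 0 then 0 else bn m z p q r / fact m)" for z m
      by (simp add: egf_def)
    have comp: "fps_nth (egf p q r 1 oo (fps_const y * fps_X)) n = y ^ n * (B1 / fact n)"
      unfolding compose_lin_nth en B1_def using False by simp
    have lhs: "fps_nth (fps_deriv (egf p q r y)) n = of_nat (Suc n) * (bn (Suc n) y p q r / fact (Suc n))"
      unfolding fps_deriv_nth en by simp
    have rhs: "fps_nth (fps_const y + fps_const (p + (y * r - q) / (1 - y)) * egf p q r y
           + fps_const (y / (1 - y)) *
               (fps_const q * egf p q r 1
                - fps_const (y * r) * (egf p q r 1 oo (fps_const y * fps_X)))) n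
       = (p + (y * r - q) / (1 - y)) * (B / fact n) + y / (1 - y) * (q * (B1 / fact n) - y * r * (y ^ n * (B1 / fact n)))"
      using False by (simp add: fps_add_nth fps_sub_nth comp en B_def B1_def)
    have fS: "(of_nat (Suc n) :: 'a) * (bn (Suc n) y p q r / fact (Suc n)) = bn (Suc n) y p q r / fact n"
    proof -
      have nz: "(of_nat (Suc n)::'a) \<noteq> 0" by (simp only: of_nat_eq_0_iff)
      have "(fact (Suc n)::'a) = of_nat (Suc n) * fact n" by (rule fact_Suc)
      then show ?thesis using nz fn by (simp del: of_nat_Suc)
    qed
    show ?thesis unfolding lhs rhs fS unfolding C by (rule alg[OF y1 fn])
  qed
qed

end
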